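(* Let $N\ge2$ and suppose there exists a robust Hadamard matrix of size $N$. Then every matrix belonging to any ray or any counter-ray of the Birkhoff polytope $\mathcal{B}_N$ is unistochastic. If moreover there exists a real robust Hadamard matrix of size $N$, then every such matrix is orthostochastic.
   Context: A bistochastic matrix is a real $N\times N$ matrix with nonnegative entries whose rows and columns each sum to 1; the set of them is the Birkhoff polytope $\mathcal{B}_N$. A bistochastic $B$ is unistochastic if there is a unitary $U\in U(N)$ with $B_{ij}=|U_{ij}|^2$ for all $i,j$, and orthostochastic if such $U$ can be chosen real orthogonal. $W_N$ denotes the $N\times N$ matrix with all entries $1/N$. For a permutation matrix $P$ of size $N$, the ray of $P$ is $\{\alpha P+(1-\alpha)W_N:\alpha\ge 0\}\cap\mathcal{B}_N$ and the counter-ray of $P$ is $\{\alpha P+(1-\alpha)W_N:\alpha\le 0\}\cap\mathcal{B}_N$. A (complex) Hadamard matrix of size $N$ is an $N\times N$ matrix $H$ with $|H_{ij}|=1$ and $HH^\dagger=N\mathbb{I}_N$; it is robust if for every $i\neq j$ the matrix $\begin{pmatrix}H_{ii}&H_{ij}\\ H_{ji}&H_{jj}\end{pmatrix}$ is a Hadamard matrix of size 2. *)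

theory Defs
  imports "HOL-Analysis.Analysis"
begin

text \<open>Square matrices of size N are indexed by a finite type 'n with CARD('n) = N.\<close>

definition bistochastic :: "real^'n^'n \<Rightarrow> bool" where
  "bistochastic B \<longleftrightarrow> (\<forall>i j. B$i$j \<ge> 0) \<and> (\<forall>i. (\<Sum>j\<in>UNIV. B$i$j) = 1) \<and> (\<forall>j. (\<Sum>i\<in>UNIV. B$i$j) = 1)"

definition cmat_adjoint :: "complex^'n^'m \<Rightarrow> complex^'m^'n" where
  "cmat_adjoint U = (\<chi> i j. cnj (U$j$i))"

definition unitary_matrix :: "complex^'n^'n \<Rightarrow> bool" where
  "unitary_matrix U \<longleftrightarrow> U ** cmat_adjoint U = mat 1 \<and> cmat_adjoint U ** U = mat 1"

definition unistochastic :: "real^'n^'n \<Rightarrow> bool" where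
  "unistochastic B \<longleftrightarrow> bistochastic B \<and>
     (\<exists>U::complex^'n^'n. unitary_matrix U \<and> (\<forall>i j. B$i$j = (cmod (U$i$j))^2))"

definition orthostochastic :: "real^'n^'n \<Rightarrow> bool" where
  "orthostochastic B \<longleftrightarrow> bistochastic B \<and>
     (\<exists>Q::real^'n^'n. orthogonal_matrix Q \<and> (\<forall>i j. B$i$j = (Q$i$j)^2))"

definition W_mat :: "real^'n^'n" where
  "W_mat = (\<chi> i j. 1 / real CARD('n))"

definition perm_matrix :: "('n \<Rightarrow> 'n) \<Rightarrow> real^'n^'n" where
  "perm_matrix p = (\<chi> i j. if p i = j then 1 else 0)"

definition ray :: "('n \<Rightarrow> 'n) \<Rightarrow> (real^'n^'n) set" where
  "ray p = {B. \<exists>\<alpha>::real. \<alpha> \<ge> 0 \<and> B = \<alpha> *\<^sub>R perm_matrix p + (1 - \<alpha>) *\<^sub>R W_mat \<and> bistochastic B}"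

definition counter_ray :: "('n \<Rightarrow> 'n) \<Rightarrow> (real^'n^'n) set" where
  "counter_ray p = {B. \<exists>\<alpha>::real. \<alpha> \<le> 0 \<and> B = \<alpha> *\<^sub>R perm_matrix p + (1 - \<alpha>) *\<^sub>R W_mat \<and> bistochastic B}"

definition hadamard :: "complex^'n^'n \<Rightarrow> bool" where
  "hadamard H \<longleftrightarrow> (\<forall>i j. cmod (H$i$j) = 1) \<and>
     H ** cmat_adjoint H = of_nat CARD('n) *\<^sub>R (mat 1 :: complex^'n^'n)"

definition robust_hadamard :: "complex^'n^'n \<Rightarrow> bool" where
  "robust_hadamard H \<longleftrightarrow> hadamard H \<and>
     (\<forall>i j. i \<noteq> j \<longrightarrow>
        hadamard ((\<chi> (k::2) (l::2). H $ (if k = 1 then i else j) $ (if l = 1 then i else j)) :: complex^2^2))"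

end

theory Submission imports Defs begin

lemma had_entry:
  fixes H :: "complex^'n^'n"
  assumes "hadamard H"
  shows "(\<Sum>j\<in>UNIV. H$a$j * cnj (H$b$j)) = (if a = b then of_nat CARD('n) else 0)"
proof -
  have "(H ** cmat_adjoint H)$a$b = (of_nat CARD('n) *\<^sub>R (mat 1 :: complex^'n^'n))$a$b"
    using assms unfolding hadamard_def by simp
  then show ?thesis apply (simp add: matrix_matrix_mult_def cmat_adjoint_def mat_def) by (simp add: scaleR_conv_of_real)
qed

lemma rob_entry:
  fixes H :: "complex^'n^'n"
  assumes "robust_hadamard H" "a \<noteq> b"
  shows "H$a$a * cnj (H$b$a) + H$a$b * cnj (H$b$b) = 0"
proof -
  let ?K = "(\<chi> (k::2) (l::2). H $ (if k = 1 then a else b) $ (if l = 1 then a else b)) :: complex^2^2"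
  have "hadamard ?K" using assms unfolding robust_hadamard_def by blast
  from had_entry[OF this, of 1 2] show ?thesis by (simp add: sum_2)
qed

lemma had_norm: "hadamard H \<Longrightarrow> H$a$b * cnj (H$a$b) = 1"
  by (metis complex_norm_square hadamard_def of_real_1 power_one)

lemma key_unitary:
  fixes H :: "complex^'n^'n" and c d :: real
  assumes rh: "robust_hadamard H" and p: "p permutes (UNIV::'n set)"
    and cd: "c^2 * real CARD('n) + 2*c*d + d^2 = 1"
  defines "V \<equiv> (\<chi> i j. of_real c * H$(p i)$j + (if p i = j then of_real d * H$j$j else 0)) :: complex^'n^'n"
  shows "V ** cmat_adjoint V = mat 1"
proof -
  have h: "hadamard H" using rh robust_hadamard_def by blast
  have "(V ** cmat_adjoint V)$i$k = (mat 1 :: complex^'n^'n)$i$k" for i k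
  proof -
    define a where "a = p i"
    define b where "b = p k"
    have ab: "a = b \<longleftrightarrow> i = k" using p unfolding a_def b_def
      by (metis permutes_inj injD)
    have e: "V$i$j * cnj (V$k$j) = of_real (c^2) * (H$a$j * cnj(H$b$j))
       + (if j = b then of_real (c*d) * (H$a$b * cnj (H$b$b)) else 0)
       + (if j = a then of_real (c*d) * (H$a$a * cnj (H$b$a)) else 0)
       + (if j = a \<and> j = b then of_real (d^2) * (H$a$a * cnj (H$a$a)) else 0)" for j
      unfolding V_def a_def b_def by (auto simp: algebra_simps power2_eq_square)
    have "(V ** cmat_adjoint V)$i$k = (\<Sum>j\<in>UNIV. V$i$j * cnj (V$k$j))"
      by (simp add: matrix_matrix_mult_def cmat_adjoint_def)
    also have "\<dots> = of_real (c^2) * (\<Sum>j\<in>UNIV. H$a$j * cnj(H$b$j))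
       + of_real (c*d) * (H$a$b * cnj (H$b$b)) + of_real (c*d) * (H$a$a * cnj (H$b$a))
       + (if a = b then of_real (d^2) * (H$a$a * cnj (H$a$a)) else 0)"
      unfolding e apply (cases "a = b") apply (simp_all add: sum.distrib sum_distrib_left) apply (rule sum.neutral) by auto
    also have "\<dots> = (mat 1 :: complex^'n^'n)$i$k"
    proof (cases "a = b")
      case True
      then have "i = k" using ab by simp
      have "of_real (c^2 * real CARD('n) + 2*c*d + d^2) = (1::complex)" using cd by simp
      then show ?thesis using True \<open>i = k\<close> had_entry[OF h, of a b] had_norm[OF h, of a a]
        by (simp add: mat_def algebra_simps)
    next
      case False
      then have "i \<noteq> k" using ab by simp
      have "of_real (c*d) * (H$a$b * cnj (H$b$b)) + of_real (c*d) * (H$a$a * cnj (H$b$a)) = 0"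
        using rob_entry[OF rh False] by (simp add: algebra_simps) (metis distrib_left mult.commute mult_zero_left)
      then show ?thesis using False \<open>i \<noteq> k\<close> had_entry[OF h, of a b]
        by (simp add: mat_def)
    qed
    finally show ?thesis .
  qed
  then show ?thesis by (simp add: vec_eq_iff)
qed

lemma construct:
  fixes H :: "complex^'n^'n" and B :: "real^'n^'n"
  assumes card: "CARD('n) \<ge> 2" and rh: "robust_hadamard H" and p: "p permutes (UNIV::'n set)"
    and Bdef: "B = \<alpha> *\<^sub>R perm_matrix p + (1 - \<alpha>) *\<^sub>R W_mat" and bs: "bistochastic B"
  shows "\<exists>V::complex^'n^'n. V ** cmat_adjoint V = mat 1 \<and> (\<forall>i j. B$i$j = (cmod (V$i$j))^2)
     \<and> ((\<forall>i j. H$i$j \<in> \<real>) \<longrightarrow> (\<forall>i j. V$i$j \<in> \<real>))"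
proof -
  define N where "N = real CARD('n)"
  have N: "N \<ge> 2" using card unfolding N_def by simp
  have Bij: "B$i$j = (if p i = j then \<alpha> else 0) + (1 - \<alpha>) / N" for i j
    unfolding Bdef perm_matrix_def W_mat_def N_def by simp
  have nn: "B$i$j \<ge> 0" for i j using bs unfolding bistochastic_def by blast
  obtain i0 :: 'n where True by blast
  have "\<exists>j::'n. j \<noteq> p i0"
  proof (rule ccontr)
    assume "\<not> ?thesis"
    then have "UNIV = {p i0}" by auto
    then have "CARD('n) = card {p i0}" by (rule arg_cong)
    then have "CARD('n) = 1" by simp
    then show False using card by simp
  qed
  then obtain j0 where "j0 \<noteq> p i0" by blast
  then have o1: "(1 - \<alpha>) / N \<ge> 0" using nn[of i0 j0] Bij[of i0 j0] by simp
  have o2: "\<alpha> + (1 - \<alpha>) / N \<ge> 0" using nn[of i0 "p i0"] Bij[of i0 "p i0"] by simp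
  define c where "c = sqrt ((1 - \<alpha>) / N)"
  define d where "d = sqrt (\<alpha> + (1 - \<alpha>) / N) - c"
  have c2: "c^2 = (1 - \<alpha>) / N" unfolding c_def using o1 by simp
  have cd2: "(c+d)^2 = \<alpha> + (1 - \<alpha>) / N" unfolding d_def using o2 by simp
  have "c^2 * N + 2*c*d + d^2 = c^2 * (N - 1) + (c+d)^2" by (simp add: algebra_simps power2_eq_square)
  also have "\<dots> = 1" unfolding c2 cd2 using N by (simp add: field_simps)
  finally have cd: "c^2 * real CARD('n) + 2*c*d + d^2 = 1" unfolding N_def .
  define V where "V \<equiv> (\<chi> i j. of_real c * H$(p i)$j + (if p i = j then of_real d * H$j$j else 0)) :: complex^'n^'n"
  have U: "V ** cmat_adjoint V = mat 1" using key_unitary[OF rh p cd] unfolding V_def by simp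
  have h: "hadamard H" using rh robust_hadamard_def by blast
  have nH: "cmod (H$i$j) = 1" for i j using h hadamard_def by blast
  have E: "B$i$j = (cmod (V$i$j))^2" for i j
  proof (cases "p i = j")
    case True
    then have "V$i$j = of_real (c + d) * H$j$j" unfolding V_def by (simp add: algebra_simps)
    then have "cmod (V$i$j) = \<bar>c + d\<bar>" by (simp only: norm_mult nH norm_of_real) simp
    then show ?thesis using True Bij[of i j] cd2 by simp
  next
    case False
    then have "V$i$j = of_real c * H$(p i)$j" unfolding V_def by simp
    then have "cmod (V$i$j) = \<bar>c\<bar>" by (simp add: norm_mult nH)
    then show ?thesis using False Bij[of i j] c2 by simp
  qed
  have R: "(\<forall>i j. H$i$j \<in> \<real>) \<longrightarrow> (\<forall>i j. V$i$j \<in> \<real>)"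
    unfolding V_def by (auto intro!: Reals_add Reals_mult)
  show ?thesis using U E R by blast
qed

theorem mainTheorem3:
  assumes "CARD('n) \<ge> 2"
    and "\<exists>H::complex^'n^'n. robust_hadamard H"
  shows "(\<forall>p B. p permutes (UNIV::'n set) \<and> B \<in> ray p \<union> counter_ray p \<longrightarrow> unistochastic B)
       \<and> ((\<exists>H'::complex^'n^'n. robust_hadamard H' \<and> (\<forall>i j. H'$i$j \<in> \<real>)) \<longrightarrow>
           (\<forall>p B. p permutes (UNIV::'n set) \<and> B \<in> ray p \<union> counter_ray p \<longrightarrow> orthostochastic B))"
proof (intro conjI allI impI)
  fix p and B :: "real^'n^'n"
  assume a: "p permutes (UNIV::'n set) \<and> B \<in> ray p \<union> counter_ray p"
  then obtain \<alpha> where Bd: "B = \<alpha> *\<^sub>R perm_matrix p + (1 - \<alpha>) *\<^sub>R W_mat" and bs: "bistochastic B"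
    unfolding ray_def counter_ray_def by blast
  obtain H :: "complex^'n^'n" where rh: "robust_hadamard H" using assms(2) by blast
  obtain V :: "complex^'n^'n" where V: "V ** cmat_adjoint V = mat 1" "\<forall>i j. B$i$j = (cmod (V$i$j))^2"
    using construct[OF assms(1) rh _ Bd bs] a by blast
  have "unitary_matrix V" unfolding unitary_matrix_def using V(1) matrix_left_right_inverse by blast
  then show "unistochastic B" unfolding unistochastic_def using bs V(2) by blast
next
  fix p and B :: "real^'n^'n"
  assume "\<exists>H'::complex^'n^'n. robust_hadamard H' \<and> (\<forall>i j. H'$i$j \<in> \<real>)"
  then obtain H :: "complex^'n^'n" where rh: "robust_hadamard H" and hr: "\<forall>i j. H$i$j \<in> \<real>" by blast
  assume a: "p permutes (UNIV::'n set) \<and> B \<in> ray p \<union> counter_ray p"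
  then obtain \<alpha> where Bd: "B = \<alpha> *\<^sub>R perm_matrix p + (1 - \<alpha>) *\<^sub>R W_mat" and bs: "bistochastic B"
    unfolding ray_def counter_ray_def by blast
  obtain V :: "complex^'n^'n" where V: "V ** cmat_adjoint V = mat 1" "\<forall>i j. B$i$j = (cmod (V$i$j))^2"
     "(\<forall>i j. H$i$j \<in> \<real>) \<longrightarrow> (\<forall>i j. V$i$j \<in> \<real>)"
    using construct[OF assms(1) rh _ Bd bs] a by blast
  define Q :: "real^'n^'n" where "Q = (\<chi> i j. Re (V$i$j))"
  have VQ: "V$i$j = of_real (Q$i$j)" for i j
    using V(3) hr unfolding Q_def by (auto simp add: Reals_def)
  have "(Q ** transpose Q)$i$k = (mat 1 :: real^'n^'n)$i$k" for i k
  proof -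
    have "(Q ** transpose Q)$i$k = Re ((V ** cmat_adjoint V)$i$k)"
      by (simp add: matrix_matrix_mult_def cmat_adjoint_def transpose_def VQ Re_sum)
    also have "\<dots> = (mat 1 :: real^'n^'n)$i$k" using V(1) by (simp add: mat_def)
    finally show ?thesis .
  qed
  then have "Q ** transpose Q = mat 1" by (simp add: vec_eq_iff)
  then have "orthogonal_matrix Q" unfolding orthogonal_matrix_def using matrix_left_right_inverse by blast
  moreover have "\<forall>i j. B$i$j = (Q$i$j)^2" using V(2) VQ by simp
  ultimately show "orthostochastic B" unfolding orthostochastic_def using bs by blast
qed

end
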